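(* Consider a multi-layer directed network from the ML-ScBM. Under $H_0:(K_s,K_r)=(K_{s0},K_{r0})$ and Assumptions 1–4, with $\hat R$ built from the labels returned by $\mathcal M$ with inputs $(K_{s0},K_{r0})$, we have $\|\hat R-R\|=o_P(1)$, where $\|\cdot\|$ is the spectral norm.
   Context: ML-ScBM: $n$ nodes, $L\ge1$ layers, adjacency matrices $A^{(\ell)}\in\{0,1\}^{n\times n}$ with zero diagonal; sender labels $g^s\in\{1,\dots,K_s\}^n$, receiver labels $g^r\in\{1,\dots,K_r\}^n$; block matrices $B^{(\ell)}\in[0,1]^{K_s\times K_r}$; entries $A^{(\ell)}(i,j)$, $i\ne j$, independent Bernoulli with mean $\Omega^{(\ell)}(i,j)=B^{(\ell)}(g^s(i),g^r(j))$, $\Omega^{(\ell)}(i,i)=0$. Quantities may depend on $n$; $K_{\max}=\max(K_s,K_r)$. Assumption 1: some $\delta\in(0,1/2)$ with $\delta\le B^{(\ell)}(k,l)\le1-\delta$. Assumption 2: for some $c_0>0$, each sender community has $\ge c_0n/K_s$ nodes, each receiver community $\ge c_0n/K_r$ nodes. Assumption 3: $K_{\max}^2L\log n/n\to0$. Assumption 4: $\mathcal M$ with inputs $(K_s,K_r)$ returns $\hat g^s,\hat g^r$ with $\mathbb P(\hat g^s=g^s)\to1$, $\mathbb P(\hat g^r=g^r)\to1$ (up to permutation). $R(i,i)=\hat R(i,i)=0$; for $i\ne j$: $R(i,j)=\frac{\sum_\ell(A^{(\ell)}(i,j)-\Omega^{(\ell)}(i,j))}{\sqrt{(n-1)\sum_\ell\Omega^{(\ell)}(i,j)(1-\Omega^{(\ell)}(i,j))}}$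 and $\hat R(i,j)=\frac{\sum_\ell(A^{(\ell)}(i,j)-\hat\Omega^{(\ell)}(i,j))}{\sqrt{(n-1)\sum_\ell\hat\Omega^{(\ell)}(i,j)(1-\hat\Omega^{(\ell)}(i,j))}}$, where $\hat\Omega^{(\ell)}(i,j)=\hat B^{(\ell)}(\hat g^s(i),\hat g^r(j))$ and $\hat B^{(\ell)}(k,l)$ is the average of $A^{(\ell)}(i,j)$ over $\hat g^s(i)=k,\hat g^r(j)=l$. *)

theory Defs
  imports "HOL-Probability.Probability"
begin

text \<open>Layers are indexed 0..L-1, nodes 0..n-1, communities 1..K.
  An adjacency tensor is a function A :: nat \<times> nat \<times> nat \<Rightarrow> bool,
  A (l, i, j) being the entry A^(l)(i,j).\<close>

type_synonym adj = "nat \<times> nat \<times> nat \<Rightarrow> bool"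

definition Omega :: "(nat \<Rightarrow> nat \<Rightarrow> nat \<Rightarrow> real) \<Rightarrow> (nat \<Rightarrow> nat) \<Rightarrow> (nat \<Rightarrow> nat)
    \<Rightarrow> nat \<Rightarrow> nat \<Rightarrow> nat \<Rightarrow> real" where
  "Omega B gs gr l i j = (if i = j then 0 else B l (gs i) (gr j))"

definition adj_pmf :: "nat \<Rightarrow> nat \<Rightarrow> (nat \<Rightarrow> nat \<Rightarrow> nat \<Rightarrow> real) \<Rightarrow> adj pmf" where
  "adj_pmf n L Om = Pi_pmf {(l, i, j). l < L \<and> i < n \<and> j < n \<and> i \<noteq> j} False
      (\<lambda>(l, i, j). bernoulli_pmf (Om l i j))"

definition Rmat :: "nat \<Rightarrow> nat \<Rightarrow> (nat \<Rightarrow> nat \<Rightarrow> nat \<Rightarrow> real) \<Rightarrow> adj \<Rightarrow> nat \<Rightarrow> nat \<Rightarrow> real" where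
  "Rmat n L Om A i j = (if i = j then 0 else
     (\<Sum>l<L. of_bool (A (l, i, j)) - Om l i j) /
     sqrt ((real n - 1) * (\<Sum>l<L. Om l i j * (1 - Om l i j))))"

definition Bhat :: "nat \<Rightarrow> adj \<Rightarrow> (nat \<Rightarrow> nat) \<Rightarrow> (nat \<Rightarrow> nat) \<Rightarrow> nat \<Rightarrow> nat \<Rightarrow> nat \<Rightarrow> real" where
  "Bhat n A hgs hgr l k k' =
     (\<Sum>i\<in>{i. i < n \<and> hgs i = k}. \<Sum>j\<in>{j. j < n \<and> hgr j = k'}. of_bool (A (l, i, j))) /
     (real (card {i. i < n \<and> hgs i = k}) * real (card {j. j < n \<and> hgr j = k'}))"

definition Rhat :: "nat \<Rightarrow> nat \<Rightarrow> adj \<Rightarrow> (nat \<Rightarrow> nat) \<Rightarrow> (nat \<Rightarrow> nat) \<Rightarrow> nat \<Rightarrow> nat \<Rightarrow> real" where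
  "Rhat n L A hgs hgr = Rmat n L (Omega (Bhat n A hgs hgr) hgs hgr) A"

definition spec_norm :: "nat \<Rightarrow> (nat \<Rightarrow> nat \<Rightarrow> real) \<Rightarrow> real" where
  "spec_norm n M = (SUP x\<in>{x :: nat \<Rightarrow> real. (\<Sum>j<n. (x j)\<^sup>2) \<le> 1}.
      sqrt (\<Sum>i<n. (\<Sum>j<n. M i j * x j)\<^sup>2))"

definition labels_equiv :: "nat \<Rightarrow> nat \<Rightarrow> (nat \<Rightarrow> nat) \<Rightarrow> (nat \<Rightarrow> nat) \<Rightarrow> bool" where
  "labels_equiv n K hg g = (\<exists>\<pi>. bij_betw \<pi> {1..K} {1..K} \<and> (\<forall>i<n. hg i = \<pi> (g i)))"

end

theory Submission
  imports Defs
begin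
lemma hoeffding_pi:
  fixes I S :: "'a set" and p :: "'a \<Rightarrow> real" and e :: real
  assumes fin: "finite I" and sub: "S \<subseteq> I" and ne: "S \<noteq> {}"
    and p01: "\<And>x. x \<in> S \<Longrightarrow> 0 \<le> p x \<and> p x \<le> 1" and e: "e \<ge> 0"
  shows "measure_pmf.prob (Pi_pmf I False (\<lambda>x. bernoulli_pmf (p x)))
     {A. \<bar>(\<Sum>x\<in>S. of_bool (A x)) - (\<Sum>x\<in>S. p x)\<bar> \<ge> e}
     \<le> 2 * exp (-2 * e\<^sup>2 / real (card S))"
proof -
  define Q where "Q = Pi_pmf I False (\<lambda>x. bernoulli_pmf (p x))"
  have finS: "finite S" using fin sub finite_subset by blast
  have ind0: "prob_space.indep_vars (measure_pmf Q) (\<lambda>_. count_space UNIV) (\<lambda>x f. f x) I"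
    unfolding Q_def by (rule indep_vars_Pi_pmf[OF fin])
  have ind1: "prob_space.indep_vars (measure_pmf Q) (\<lambda>_. count_space UNIV) (\<lambda>x f. f x) S"
    using prob_space.indep_vars_subset[OF measure_pmf.prob_space_axioms ind0 sub] .
  have ind: "prob_space.indep_vars (measure_pmf Q) (\<lambda>_. borel) (\<lambda>x A. of_bool (A x) :: real) S"
    using prob_space.indep_vars_compose2[OF measure_pmf.prob_space_axioms ind1, where Y="\<lambda>_ b. of_bool b" and N="\<lambda>_. borel"]
    by simp
  have ex: "measure_pmf.expectation Q (\<lambda>A. of_bool (A x) :: real) = p x" if "x \<in> S" for x
  proof -
    have "measure_pmf.expectation Q (\<lambda>A. of_bool (A x) :: real)
        = measure_pmf.expectation (map_pmf (\<lambda>f. f x) Q) (\<lambda>b. of_bool b :: real)" by simp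
    also have "map_pmf (\<lambda>f. f x) Q = bernoulli_pmf (p x)"
      unfolding Q_def using Pi_pmf_component[OF fin, of x False "\<lambda>x. bernoulli_pmf (p x)"] that sub by auto
    finally show ?thesis using p01[OF that] by simp
  qed
  interpret H: Hoeffding_ineq "measure_pmf Q" S "\<lambda>x A. of_bool (A x) :: real" "\<lambda>_. 0" "\<lambda>_. 1"
      "\<Sum>i\<in>S. measure_pmf.expectation Q (\<lambda>A. of_bool (A i) :: real)"
    by unfold_locales (auto simp: finS ind)
  have mu: "(\<Sum>i\<in>S. measure_pmf.expectation Q (\<lambda>A. of_bool (A i) :: real)) = (\<Sum>x\<in>S. p x)"
    using ex by simp
  have pos: "(\<Sum>i\<in>S. ((1::real) - 0)\<^sup>2) > 0" using finS ne by (simp add: card_gt_0_iff)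
  have "measure_pmf.prob Q {x\<in>space (measure_pmf Q). \<bar>(\<Sum>i\<in>S. of_bool (x i)) - (\<Sum>i\<in>S. measure_pmf.expectation Q (\<lambda>A. of_bool (A i) :: real))\<bar> \<ge> e}
     \<le> 2 * exp (-2 * e\<^sup>2 / (\<Sum>i\<in>S. ((1::real) - 0)\<^sup>2))"
    by (rule H.Hoeffding_ineq_abs_ge[OF e pos])
  then show ?thesis unfolding Q_def[symmetric] mu by simp
qed

lemma spec_norm_le:
  assumes b: "b \<ge> 0" and bd: "\<And>i j. i < n \<Longrightarrow> j < n \<Longrightarrow> \<bar>Mm i j\<bar> \<le> b"
  shows "spec_norm n Mm \<le> real n * b"
  unfolding spec_norm_def
proof (rule cSUP_least)
  show "{x :: nat \<Rightarrow> real. (\<Sum>j<n. (x j)\<^sup>2) \<le> 1} \<noteq> {}"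
  proof -
    have "(\<lambda>_. 0::real) \<in> {x :: nat \<Rightarrow> real. (\<Sum>j<n. (x j)\<^sup>2) \<le> 1}" by simp
    then show ?thesis by (metis empty_iff)
  qed
next
  fix x :: "nat \<Rightarrow> real" assume "x \<in> {x. (\<Sum>j<n. (x j)\<^sup>2) \<le> 1}"
  then have x: "(\<Sum>j<n. (x j)\<^sup>2) \<le> 1" by simp
  have row: "(\<Sum>j<n. Mm i j * x j)\<^sup>2 \<le> real n * b\<^sup>2" if i: "i < n" for i
  proof -
    have "(\<Sum>j<n. Mm i j * x j)\<^sup>2 \<le> (\<Sum>j<n. (Mm i j)\<^sup>2) * (\<Sum>j<n. (x j)\<^sup>2)"
      by (rule Cauchy_Schwarz_ineq_sum)
    also have "\<dots> \<le> (\<Sum>j<n. (Mm i j)\<^sup>2) * 1"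
      by (intro mult_left_mono x sum_nonneg) auto
    also have "\<dots> \<le> (\<Sum>j<n. b\<^sup>2)"
    proof -
      have "(Mm i j)\<^sup>2 \<le> b\<^sup>2" if "j < n" for j
      proof -
        have "\<bar>Mm i j\<bar>\<^sup>2 \<le> b\<^sup>2" by (rule power_mono[OF bd[OF i that]]) simp
        then show ?thesis by simp
      qed
      then have "(\<Sum>j<n. (Mm i j)\<^sup>2) \<le> (\<Sum>j<n. b\<^sup>2)" by (intro sum_mono) auto
      then show ?thesis by simp
    qed
    finally show ?thesis by simp
  qed
  have "(\<Sum>i<n. (\<Sum>j<n. Mm i j * x j)\<^sup>2) \<le> (\<Sum>i<n. real n * b\<^sup>2)"
    by (intro sum_mono row) auto
  also have "\<dots> = (real n * b)\<^sup>2" by (simp add: power2_eq_square)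
  finally have "sqrt (\<Sum>i<n. (\<Sum>j<n. Mm i j * x j)\<^sup>2) \<le> sqrt ((real n * b)\<^sup>2)"
    by (rule real_sqrt_le_mono)
  also have "\<dots> = real n * b" using b by simp
  finally show "sqrt (\<Sum>i<n. (\<Sum>j<n. Mm i j * x j)\<^sup>2) \<le> real n * b" .
qed


lemma alg_aux:
  fixes a b s t :: real
  assumes "a > 0" "b > 0" "s > 0"
  shows "(a*a)*t/(s*(a*b/2)) + (a*a)*((a*a)*t/(2*(a*b/2)))/(s*(a*b/2)*(a*b/2))
     = (2/b + 4/((b*b)*b))*t*a/s"
  using assms by (simp add: field_simps power2_eq_square power3_eq_cube)

lemma abs_core:
  fixes X D V W Lr m \<delta> t :: real
  assumes X: "\<bar>X\<bar> \<le> Lr" and D: "\<bar>D\<bar> \<le> Lr * t" and V: "V \<ge> Lr * \<delta> / 4" and W: "W \<ge> Lr * \<delta> / 4"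
    and VW: "\<bar>V - W\<bar> \<le> Lr * t" and Lr: "Lr > 0" and m: "m > 0" and d: "\<delta> > 0" and t: "t \<ge> 0"
  shows "\<bar>(X + D) / sqrt (m * W) - X / sqrt (m * V)\<bar>
     \<le> (2 / sqrt \<delta> + 4 / (\<delta> * sqrt \<delta>)) * t * sqrt Lr / sqrt m"
proof -
  define u where "u = sqrt V"
  define v where "v = sqrt W"
  define sm where "sm = sqrt m"
  define q where "q = sqrt Lr * sqrt \<delta> / 2"
  have q0: "q > 0" using Lr d by (simp add: q_def)
  have qsq: "q\<^sup>2 = Lr * \<delta> / 4" using Lr d by (simp add: q_def power_mult_distrib power_divide)
  have uq: "u \<ge> q"
  proof -
    have "sqrt (q\<^sup>2) \<le> sqrt V" using V qsq by (intro real_sqrt_le_mono) simp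
    then show ?thesis using q0 by (simp add: u_def)
  qed
  have vq: "v \<ge> q"
  proof -
    have "sqrt (q\<^sup>2) \<le> sqrt W" using W qsq by (intro real_sqrt_le_mono) simp
    then show ?thesis using q0 by (simp add: v_def)
  qed
  have sm0: "sm > 0" using m by (simp add: sm_def)
  have LD: "Lr * \<delta> / 4 > 0" using Lr d by simp
  have V0: "V \<ge> 0" using V LD by linarith
  have W0: "W \<ge> 0" using W LD by linarith
  have uu: "u * u = V" using V0 by (simp add: u_def)
  have vv: "v * v = W" using W0 by (simp add: v_def)
  have eq: "(X + D) / sqrt (m * W) - X / sqrt (m * V) = D / (sm * v) + X * (u - v) / (sm * u * v)"
  proof -
    have a: "sqrt (m * W) = sm * v" "sqrt (m * V) = sm * u"
      by (simp_all add: real_sqrt_mult sm_def u_def v_def)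
    have "sm * v \<noteq> 0" "sm * u \<noteq> 0" "u \<noteq> 0" "v \<noteq> 0" "sm \<noteq> 0" using sm0 uq vq q0 by auto
    then show ?thesis unfolding a by (simp add: field_simps)
  qed
  have t1: "\<bar>D / (sm * v)\<bar> \<le> Lr * t / (sm * q)"
  proof -
    have "\<bar>D / (sm * v)\<bar> = \<bar>D\<bar> / (sm * v)" using sm0 uq vq q0 by (simp add: abs_divide)
    also have "\<dots> \<le> Lr * t / (sm * v)" using D sm0 vq q0 by (intro divide_right_mono) auto
    also have "\<dots> \<le> Lr * t / (sm * q)" using sm0 vq q0 Lr t
      by (intro divide_left_mono mult_left_mono mult_pos_pos) auto
    finally show ?thesis .
  qed
  have uv: "\<bar>u - v\<bar> \<le> Lr * t / (2 * q)"
  proof -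
    have "\<bar>u - v\<bar> * (u + v) = \<bar>(u - v) * (u + v)\<bar>"
      using uq vq q0 by (simp add: abs_mult)
    also have "\<bar>(u - v) * (u + v)\<bar> = \<bar>V - W\<bar>" by (simp add: uu[symmetric] vv[symmetric] algebra_simps)
    also have "\<dots> \<le> Lr * t" by (rule VW)
    finally have a: "\<bar>u - v\<bar> * (u + v) \<le> Lr * t" .
    have "\<bar>u - v\<bar> * (2 * q) \<le> \<bar>u - v\<bar> * (u + v)" using uq vq by (intro mult_left_mono) auto
    with a have "\<bar>u - v\<bar> * (2 * q) \<le> Lr * t" by linarith
    then show ?thesis using q0 by (simp add: field_simps)
  qed
  have t2: "\<bar>X * (u - v) / (sm * u * v)\<bar> \<le> Lr * (Lr * t / (2 * q)) / (sm * q * q)"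
  proof -
    have "\<bar>X * (u - v) / (sm * u * v)\<bar> = \<bar>X\<bar> * \<bar>u - v\<bar> / (sm * u * v)"
      using sm0 uq vq q0 by (simp add: abs_divide abs_mult)
    also have "\<dots> \<le> Lr * (Lr * t / (2 * q)) / (sm * u * v)"
      using sm0 uq vq q0 X uv by (intro divide_right_mono mult_mono) auto
    also have "\<dots> \<le> Lr * (Lr * t / (2 * q)) / (sm * q * q)"
      using sm0 uq vq q0 Lr t
      by (intro divide_left_mono mult_mono mult_pos_pos) auto
    finally show ?thesis .
  qed
  have "\<bar>(X + D) / sqrt (m * W) - X / sqrt (m * V)\<bar> \<le> Lr * t / (sm * q) + Lr * (Lr * t / (2 * q)) / (sm * q * q)"
    unfolding eq using t1 t2 abs_triangle_ineq[of "D / (sm * v)" "X * (u - v) / (sm * u * v)"] by linarith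
  also have "\<dots> = (2 / sqrt \<delta> + 4 / (\<delta> * sqrt \<delta>)) * t * sqrt Lr / sm"
  proof -
    have sL: "sqrt Lr * sqrt Lr = Lr" using Lr by simp
    have sd: "sqrt \<delta> * sqrt \<delta> = \<delta>" using d by simp
    have "sqrt Lr > 0" "sqrt \<delta> > 0" using Lr d by auto
    then show ?thesis using sm0 alg_aux[of "sqrt Lr" "sqrt \<delta>" sm t] unfolding q_def sL sd by simp
  qed
  finally show ?thesis by (simp add: sm_def)
qed

definition blk :: "nat \<Rightarrow> (nat \<Rightarrow> nat) \<Rightarrow> (nat \<Rightarrow> nat) \<Rightarrow> nat \<Rightarrow> nat \<Rightarrow> (nat \<times> nat) set" where
  "blk n gs gr k k' = {(i, j). i < n \<and> j < n \<and> i \<noteq> j \<and> gs i = k \<and> gr j = k'}"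

lemma blk_eq: "blk n gs gr k k' = {p \<in> {i. i < n \<and> gs i = k} \<times> {j. j < n \<and> gr j = k'}. fst p \<noteq> snd p}"
  by (auto simp: blk_def)

lemma finite_blk: "finite (blk n gs gr k k')"
  unfolding blk_eq by (rule finite_subset[of _ "{..<n} \<times> {..<n}"]) auto

lemma decomp:
  fixes S R :: "nat set" and f :: "nat \<times> nat \<Rightarrow> real"
  assumes fS: "finite S" and fR: "finite R"
  shows "(\<Sum>i\<in>S. \<Sum>j\<in>R. f (i, j)) = sum f {p\<in>S \<times> R. fst p \<noteq> snd p} + sum f {p\<in>S \<times> R. fst p = snd p}"
    and "card S * card R = card {p\<in>S \<times> R. fst p \<noteq> snd p} + card {p\<in>S \<times> R. fst p = snd p}"
    and "card {p\<in>S \<times> R. fst p = snd p} \<le> card S"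
proof -
  have fin: "finite (S \<times> R)" using fS fR by simp
  have un: "S \<times> R = {p\<in>S \<times> R. fst p \<noteq> snd p} \<union> {p\<in>S \<times> R. fst p = snd p}" by auto
  have dj: "{p\<in>S \<times> R. fst p \<noteq> snd p} \<inter> {p\<in>S \<times> R. fst p = snd p} = {}" by auto
  have "(\<Sum>i\<in>S. \<Sum>j\<in>R. f (i, j)) = sum f (S \<times> R)"
    by (simp add: sum.cartesian_product)
  also have "\<dots> = sum f {p\<in>S \<times> R. fst p \<noteq> snd p} + sum f {p\<in>S \<times> R. fst p = snd p}"
    by (subst un, rule sum.union_disjoint) (use fin dj in auto)
  finally show "(\<Sum>i\<in>S. \<Sum>j\<in>R. f (i, j)) = sum f {p\<in>S \<times> R. fst p \<noteq> snd p} + sum f {p\<in>S \<times> R. fst p = snd p}" .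
  have "card S * card R = card (S \<times> R)" by (simp add: card_cartesian_product)
  also have "\<dots> = card {p\<in>S \<times> R. fst p \<noteq> snd p} + card {p\<in>S \<times> R. fst p = snd p}"
    by (subst un, rule card_Un_disjoint) (use fin dj in auto)
  finally show "card S * card R = card {p\<in>S \<times> R. fst p \<noteq> snd p} + card {p\<in>S \<times> R. fst p = snd p}" .
  have "{p\<in>S \<times> R. fst p = snd p} \<subseteq> (\<lambda>i. (i, i)) ` S" by auto
  then have "card {p\<in>S \<times> R. fst p = snd p} \<le> card ((\<lambda>i. (i, i)) ` S)"
    using fS by (intro card_mono) auto
  also have "\<dots> \<le> card S" by (rule card_image_le[OF fS])
  finally show "card {p\<in>S \<times> R. fst p = snd p} \<le> card S" .
qed

lemma arith_bias:
  fixes N Nb Nd Ns Nr cR Sb Sd b s :: real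
  assumes "N = Nb + Nd" "Nd \<le> Ns" "N = Ns * Nr" "Ns \<ge> 1" "Nr \<ge> cR" "cR > 0"
    "\<bar>Sb - Nb * b\<bar> \<le> Nb * s" "0 \<le> Sd" "Sd \<le> Nd" "0 \<le> b" "b \<le> 1" "s \<ge> 0" "Nb \<ge> 0" "Nd \<ge> 0"
  shows "\<bar>(Sb + Sd) / N - b\<bar> \<le> s + 1 / cR"
proof -
  have Npos: "N > 0" using assms by (smt (verit) mult_pos_pos)
  have "(Sb + Sd) / N - b = ((Sb - Nb * b) + (Sd - Nd * b)) / N"
    using Npos assms(1) by (simp add: field_simps)
  moreover have "\<bar>Sd - Nd * b\<bar> \<le> Nd"
  proof -
    have "Nd * b \<le> Nd" "0 \<le> Nd * b" using assms by (auto simp: mult_left_le)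
    then show ?thesis using assms by linarith
  qed
  ultimately have "\<bar>(Sb + Sd) / N - b\<bar> \<le> (Nb * s + Nd) / N"
    using Npos assms(7) by (simp add: abs_divide divide_right_mono abs_triangle_ineq
        order_trans[OF abs_triangle_ineq])
  also have "\<dots> \<le> (N * s + Ns) / N"
  proof -
    have "N * s = Nb * s + Nd * s" using assms(1) by (simp add: algebra_simps)
    moreover have "Nd * s \<ge> 0" using assms by simp
    ultimately have "Nb * s + Nd \<le> N * s + Ns" using assms(2) by linarith
    then show ?thesis using Npos by (intro divide_right_mono) auto
  qed
  also have "\<dots> = s + 1 / Nr" using Npos assms by (simp add: field_simps)
  also have "\<dots> \<le> s + 1 / cR" using assms by (simp add: frac_le)
  finally show ?thesis .
qed

lemma relabel_set:
  assumes le: "labels_equiv n K hg g" and rg: "\<And>i. i < n \<Longrightarrow> g i \<in> {1..K}" and i0: "i0 < n"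
  shows "{i. i < n \<and> hg i = hg i0} = {i. i < n \<and> g i = g i0}"
proof -
  obtain \<pi> where bij: "bij_betw \<pi> {1..K} {1..K}" and h: "\<forall>i<n. hg i = \<pi> (g i)"
    using le unfolding labels_equiv_def by blast
  have inj: "inj_on \<pi> {1..K}" using bij by (rule bij_betw_imp_inj_on)
  show ?thesis
  proof (intro set_eqI iffI)
    fix i assume "i \<in> {i. i < n \<and> hg i = hg i0}"
    then have i: "i < n" and "\<pi> (g i) = \<pi> (g i0)" using h i0 by auto
    then show "i \<in> {i. i < n \<and> g i = g i0}" using inj rg[OF i] rg[OF i0] by (auto dest: inj_onD)
  next
    fix i assume "i \<in> {i. i < n \<and> g i = g i0}"
    then show "i \<in> {i. i < n \<and> hg i = hg i0}" using h i0 by auto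
  qed
qed

lemma bhat_relabel:
  assumes "labels_equiv n Ks hgs gs" "labels_equiv n Kr hgr gr"
    "\<And>i. i < n \<Longrightarrow> gs i \<in> {1..Ks}" "\<And>i. i < n \<Longrightarrow> gr i \<in> {1..Kr}" "i < n" "j < n"
  shows "Bhat n A hgs hgr l (hgs i) (hgr j) = Bhat n A gs gr l (gs i) (gr j)"
proof -
  have e1: "{i'. i' < n \<and> hgs i' = hgs i} = {i'. i' < n \<and> gs i' = gs i}" by (rule relabel_set[OF assms(1,3,5)])
  have e2: "{i'. i' < n \<and> hgr i' = hgr j} = {i'. i' < n \<and> gr i' = gr j}" by (rule relabel_set[OF assms(2,4,6)])
  show ?thesis unfolding Bhat_def e1 e2 ..
qed

lemma bhat_close:
  fixes A :: adj and gs gr :: "nat \<Rightarrow> nat"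
  assumes i0: "i0 < n" and j0: "j0 < n" and s: "s \<ge> 0" and b01: "0 \<le> b" "b \<le> 1"
    and good: "\<bar>\<Sum>(i, j)\<in>blk n gs gr (gs i0) (gr j0). of_bool (A (l, i, j)) - b\<bar>
                 \<le> real (card (blk n gs gr (gs i0) (gr j0))) * s"
    and cR: "real (card {j. j < n \<and> gr j = gr j0}) \<ge> cR" "cR > 0"
  shows "\<bar>Bhat n A gs gr l (gs i0) (gr j0) - b\<bar> \<le> s + 1 / cR"
proof -
  define Sk where "Sk = {i. i < n \<and> gs i = gs i0}"
  define Rk where "Rk = {j. j < n \<and> gr j = gr j0}"
  define f where "f = (\<lambda>(i, j). of_bool (A (l, i, j)) :: real)"
  define Bk where "Bk = {p\<in>Sk \<times> Rk. fst p \<noteq> snd p}"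
  define Dg where "Dg = {p\<in>Sk \<times> Rk. fst p = snd p}"
  have fS: "finite Sk" unfolding Sk_def by (rule finite_subset[of _ "{..<n}"]) auto
  have fR: "finite Rk" unfolding Rk_def by (rule finite_subset[of _ "{..<n}"]) auto
  have blkeq: "blk n gs gr (gs i0) (gr j0) = Bk" unfolding Bk_def Sk_def Rk_def blk_eq ..
  have d1: "(\<Sum>i\<in>Sk. \<Sum>j\<in>Rk. f (i, j)) = sum f Bk + sum f Dg"
    unfolding Bk_def Dg_def by (rule decomp(1)[OF fS fR])
  have d2: "card Sk * card Rk = card Bk + card Dg"
    unfolding Bk_def Dg_def by (rule decomp(2)[OF fS fR])
  have d3: "card Dg \<le> card Sk"
    unfolding Dg_def by (rule decomp(3)[OF fS fR])
  have fBk: "finite Bk" using fS fR unfolding Bk_def by simp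
  have fDg: "finite Dg" using fS fR unfolding Dg_def by simp
  have Ss: "card Sk \<ge> 1" using i0 fS unfolding Sk_def by (metis (mono_tags, lifting) One_nat_def Suc_leI card_gt_0_iff empty_iff mem_Collect_eq)
  have Sb: "(\<Sum>p\<in>Bk. f p - b) = sum f Bk - real (card Bk) * b" by (simp add: sum_subtractf)
  have good': "\<bar>sum f Bk - real (card Bk) * b\<bar> \<le> real (card Bk) * s"
    using good unfolding blkeq Sb[symmetric] by (simp add: f_def case_prod_unfold)
  have Sd: "0 \<le> sum f Dg" "sum f Dg \<le> real (card Dg)"
    using sum_bounded_above[of Dg f 1] by (auto simp: f_def intro!: sum_nonneg)
  have "Bhat n A gs gr l (gs i0) (gr j0) = (sum f Bk + sum f Dg) / (real (card Sk) * real (card Rk))"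
    unfolding Bhat_def Sk_def[symmetric] Rk_def[symmetric] d1[symmetric] by (simp add: f_def)
  also have "\<bar>\<dots> - b\<bar> \<le> s + 1 / cR"
  proof (rule arith_bias[where Nb = "real (card Bk)" and Nd = "real (card Dg)" and Ns = "real (card Sk)" and Nr = "real (card Rk)"])
    show "real (card Sk) * real (card Rk) = real (card Bk) + real (card Dg)"
      using d2 by (metis of_nat_add of_nat_mult)
    show "real (card Dg) \<le> real (card Sk)" using d3 by simp
    show "real (card Sk) \<ge> 1" using Ss by simp
    show "real (card Rk) \<ge> cR" using cR unfolding Rk_def by simp
  qed (use cR good' Sd b01 s in auto)
  finally show ?thesis .
qed

lemma xx_lip:
  fixes x y :: real
  assumes "0 \<le> x" "x \<le> 1" "0 \<le> y" "y \<le> 1"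
  shows "\<bar>x * (1 - x) - y * (1 - y)\<bar> \<le> \<bar>x - y\<bar>"
proof -
  have "x * (1 - x) - y * (1 - y) = (x - y) * (1 - x - y)" by (simp add: algebra_simps)
  moreover have "\<bar>1 - x - y\<bar> \<le> 1" using assms by simp
  ultimately show ?thesis
    by (simp add: abs_mult) (metis abs_ge_zero mult_left_mono mult.right_neutral)
qed

lemma entry_full:
  fixes a :: "nat \<Rightarrow> bool" and Bv Bt :: "nat \<Rightarrow> real" and L :: nat and m \<delta> t :: real
  assumes L: "L \<ge> 1" and m: "m > 0" and d: "0 < \<delta>" "\<delta> < 1/2" and t: "0 \<le> t" "t \<le> \<delta> / 4"
    and Bv: "\<And>l. l < L \<Longrightarrow> \<delta> \<le> Bv l \<and> Bv l \<le> 1 - \<delta>"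
    and Bt: "\<And>l. l < L \<Longrightarrow> \<bar>Bt l - Bv l\<bar> \<le> t"
  shows "\<bar>(\<Sum>l<L. of_bool (a l) - Bt l) / sqrt (m * (\<Sum>l<L. Bt l * (1 - Bt l)))
          - (\<Sum>l<L. of_bool (a l) - Bv l) / sqrt (m * (\<Sum>l<L. Bv l * (1 - Bv l)))\<bar>
        \<le> (2 / sqrt \<delta> + 4 / (\<delta> * sqrt \<delta>)) * t * sqrt (real L) / sqrt m"
proof -
  define X where "X = (\<Sum>l<L. of_bool (a l) - Bv l)"
  define D where "D = (\<Sum>l<L. Bv l - Bt l)"
  define V where "V = (\<Sum>l<L. Bv l * (1 - Bv l))"
  define W where "W = (\<Sum>l<L. Bt l * (1 - Bt l))"
  have XD: "(\<Sum>l<L. of_bool (a l) - Bt l) = X + D"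
    unfolding X_def D_def by (simp add: sum.distrib[symmetric])
  have Xb: "\<bar>X\<bar> \<le> real L"
  proof -
    have "\<bar>X\<bar> \<le> (\<Sum>l<L. \<bar>of_bool (a l) - Bv l\<bar>)" unfolding X_def by (rule sum_abs)
    also have "\<dots> \<le> (\<Sum>l<L. 1)" using Bv d by (intro sum_mono) (fastforce simp: abs_le_iff)
    finally show ?thesis by simp
  qed
  have Db: "\<bar>D\<bar> \<le> real L * t"
  proof -
    have "\<bar>D\<bar> \<le> (\<Sum>l<L. \<bar>Bv l - Bt l\<bar>)" unfolding D_def by (rule sum_abs)
    also have "\<dots> \<le> (\<Sum>l<L. t)" using Bt by (intro sum_mono) (simp add: abs_minus_commute)
    finally show ?thesis by simp
  qed
  have Vb: "V \<ge> real L * \<delta> / 2"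
  proof -
    have "(\<Sum>l<L. \<delta> / 2) \<le> V" unfolding V_def
    proof (intro sum_mono)
      fix l assume "l \<in> {..<L}"
      then have b: "\<delta> \<le> Bv l" "Bv l \<le> 1 - \<delta>" using Bv by auto
      have e: "Bv l * (1 - Bv l) - \<delta> * (1 - \<delta>) = (Bv l - \<delta>) * (1 - \<delta> - Bv l)" by (simp add: algebra_simps)
      have "(Bv l - \<delta>) * (1 - \<delta> - Bv l) \<ge> 0" using b by simp
      moreover have "\<delta> * (1/2) \<le> \<delta> * (1 - \<delta>)" using d by (intro mult_left_mono) auto
      ultimately show "\<delta> / 2 \<le> Bv l * (1 - Bv l)" using e by linarith
    qed
    then show ?thesis by simp
  qed
  have VW: "\<bar>V - W\<bar> \<le> real L * t"
  proof -
    have "\<bar>V - W\<bar> \<le> (\<Sum>l<L. \<bar>Bv l * (1 - Bv l) - Bt l * (1 - Bt l)\<bar>)"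
      unfolding V_def W_def by (simp add: sum_subtractf[symmetric] sum_abs)
    also have "\<dots> \<le> (\<Sum>l<L. t)"
    proof (intro sum_mono)
      fix l assume "l \<in> {..<L}"
      then have b: "\<delta> \<le> Bv l" "Bv l \<le> 1 - \<delta>" "\<bar>Bt l - Bv l\<bar> \<le> t" using Bv Bt by auto
      have "\<bar>Bv l * (1 - Bv l) - Bt l * (1 - Bt l)\<bar> \<le> \<bar>Bv l - Bt l\<bar>"
        using b d t by (intro xx_lip) (auto simp: abs_le_iff)
      then show "\<bar>Bv l * (1 - Bv l) - Bt l * (1 - Bt l)\<bar> \<le> t" using b by (simp add: abs_minus_commute)
    qed
    finally show ?thesis by simp
  qed
  have Wb: "W \<ge> real L * \<delta> / 4"
  proof -
    have "real L * t \<le> real L * (\<delta> / 4)" using t by (intro mult_left_mono) auto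
    then show ?thesis using Vb VW by (simp add: abs_le_iff)
  qed
  have Vb4: "V \<ge> real L * \<delta> / 4"
  proof -
    have "real L * \<delta> / 4 \<le> real L * \<delta> / 2" using d by (simp add: divide_left_mono)
    then show ?thesis using Vb by linarith
  qed
  have "\<bar>(X + D) / sqrt (m * W) - X / sqrt (m * V)\<bar> \<le> (2 / sqrt \<delta> + 4 / (\<delta> * sqrt \<delta>)) * t * sqrt (real L) / sqrt m"
    by (rule abs_core[OF Xb Db Vb4 Wb VW]) (use L m d t in auto)
  then show ?thesis unfolding XD[symmetric] unfolding X_def V_def W_def D_def .

qed

lemma block_prob:
  fixes B :: "nat \<Rightarrow> nat \<Rightarrow> nat \<Rightarrow> real" and gs gr :: "nat \<Rightarrow> nat"
  assumes l: "l < L" and s: "s \<ge> 0" and b01: "0 \<le> B l k k'" "B l k k' \<le> 1"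
  shows "measure_pmf.prob (adj_pmf n L (Omega B gs gr))
     {A. \<bar>\<Sum>(i, j)\<in>blk n gs gr k k'. of_bool (A (l, i, j)) - B l k k'\<bar>
          > real (card (blk n gs gr k k')) * s}
     \<le> 2 * exp (-2 * real (card (blk n gs gr k k')) * s\<^sup>2)"
proof (cases "blk n gs gr k k' = {}")
  case True
  then show ?thesis by simp
next
  case False
  define Bk where "Bk = blk n gs gr k k'"
  define Idx where "Idx = {(l, i, j). l < L \<and> i < n \<and> j < n \<and> i \<noteq> j}"
  define p where "p = (\<lambda>x :: nat \<times> nat \<times> nat. Omega B gs gr (fst x) (fst (snd x)) (snd (snd x)))"
  define T where "T = (\<lambda>(i, j). (l, i, j)) ` Bk"
  have fBk: "finite Bk" unfolding Bk_def by (rule finite_blk)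
  have finI: "finite Idx"
    unfolding Idx_def by (rule finite_subset[of _ "{..<L} \<times> {..<n} \<times> {..<n}"]) auto
  have inj: "inj_on (\<lambda>(i, j). (l, i, j)) Bk" by (auto simp: inj_on_def)
  have TI: "T \<subseteq> Idx" using l unfolding T_def Idx_def Bk_def blk_def by auto
  have Tne: "T \<noteq> {}" using False unfolding T_def Bk_def by simp
  have cT: "card T = card Bk" unfolding T_def by (rule card_image[OF inj])
  have pmf_eq: "adj_pmf n L (Omega B gs gr) = Pi_pmf Idx False (\<lambda>x. bernoulli_pmf (p x))"
    unfolding adj_pmf_def Idx_def p_def by (intro arg_cong[where f="Pi_pmf _ False"] ext) (auto split: prod.splits)
  have p01: "0 \<le> p x \<and> p x \<le> 1" if "x \<in> T" for x
    using that b01 unfolding T_def Bk_def blk_def p_def Omega_def by auto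
  have sumA: "(\<Sum>x\<in>T. of_bool (A x)) = (\<Sum>(i, j)\<in>Bk. of_bool (A (l, i, j)))" for A :: adj
    unfolding T_def by (subst sum.reindex[OF inj]) (simp add: case_prod_unfold)
  have sump: "(\<Sum>x\<in>T. p x) = real (card Bk) * B l k k'"
  proof -
    have "(\<Sum>x\<in>T. p x) = (\<Sum>x\<in>Bk. p ((\<lambda>(i, j). (l, i, j)) x))"
      unfolding T_def by (rule sum.reindex[OF inj, unfolded comp_def])
    also have "\<dots> = (\<Sum>x\<in>Bk. B l k k')"
      by (rule sum.cong) (auto simp: p_def Omega_def Bk_def blk_def)
    finally show ?thesis by simp
  qed
  have sub: "{A. \<bar>\<Sum>(i, j)\<in>Bk. of_bool (A (l, i, j)) - B l k k'\<bar> > real (card Bk) * s}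
      \<subseteq> {A. \<bar>(\<Sum>x\<in>T. of_bool (A x)) - (\<Sum>x\<in>T. p x)\<bar> \<ge> real (card Bk) * s}"
  proof
    fix A :: adj assume "A \<in> {A. \<bar>\<Sum>(i, j)\<in>Bk. of_bool (A (l, i, j)) - B l k k'\<bar> > real (card Bk) * s}"
    then have "\<bar>(\<Sum>(i, j)\<in>Bk. of_bool (A (l, i, j))) - real (card Bk) * B l k k'\<bar> > real (card Bk) * s"
      by (simp add: case_prod_unfold sum_subtractf)
    then show "A \<in> {A. \<bar>(\<Sum>x\<in>T. of_bool (A x)) - (\<Sum>x\<in>T. p x)\<bar> \<ge> real (card Bk) * s}"
      unfolding sumA sump by simp
  qed
  have "measure_pmf.prob (adj_pmf n L (Omega B gs gr))
     {A. \<bar>\<Sum>(i, j)\<in>Bk. of_bool (A (l, i, j)) - B l k k'\<bar> > real (card Bk) * s}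
     \<le> measure_pmf.prob (Pi_pmf Idx False (\<lambda>x. bernoulli_pmf (p x)))
        {A. \<bar>(\<Sum>x\<in>T. of_bool (A x)) - (\<Sum>x\<in>T. p x)\<bar> \<ge> real (card Bk) * s}"
    unfolding pmf_eq by (rule measure_pmf.finite_measure_mono[OF sub]) simp
  also have "\<dots> \<le> 2 * exp (-2 * (real (card Bk) * s)\<^sup>2 / real (card T))"
    by (rule hoeffding_pi[OF finI TI Tne p01]) (use s in auto)
  also have "2 * exp (-2 * (real (card Bk) * s)\<^sup>2 / real (card T)) = 2 * exp (-2 * real (card Bk) * s\<^sup>2)"
  proof -
    have "card T > 0" using Tne finI TI by (meson card_gt_0_iff finite_subset)
    then show ?thesis using cT by (simp add: power2_eq_square)
  qed
  finally show ?thesis unfolding Bk_def .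
qed

lemma final_arith:
  fixes n L C t \<epsilon> :: real
  assumes n: "n \<ge> 2" and L: "L \<ge> 1" and C: "C \<ge> 0" and t: "t \<ge> 0" and e: "\<epsilon> > 0"
    and h: "2 * C\<^sup>2 * t\<^sup>2 * n * L \<le> \<epsilon>\<^sup>2"
  shows "n * (C * t * sqrt L / sqrt (n - 1)) \<le> \<epsilon>"
proof (rule power2_le_imp_le)
  have n1: "n - 1 > 0" using n by simp
  have "(n * (C * t * sqrt L / sqrt (n - 1)))\<^sup>2 = n\<^sup>2 * C\<^sup>2 * t\<^sup>2 * L / (n - 1)"
    using n1 L by (simp add: power_mult_distrib power_divide)
  also have "\<dots> \<le> 2 * C\<^sup>2 * t\<^sup>2 * n * L"
  proof -
    have e1: "2 * n * (n - 1) - n\<^sup>2 = n * (n - 2)" by (simp add: power2_eq_square algebra_simps)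
    have "n * (n - 2) \<ge> 0" using n by simp
    then have "n\<^sup>2 \<le> 2 * n * (n - 1)" using e1 by linarith
    then have "n\<^sup>2 * (C\<^sup>2 * t\<^sup>2 * L) \<le> 2 * n * (n - 1) * (C\<^sup>2 * t\<^sup>2 * L)"
      using C t L by (intro mult_right_mono) auto
    then show ?thesis using n1 by (simp add: field_simps)
  qed
  also have "\<dots> \<le> \<epsilon>\<^sup>2" by (rule h)
  finally show "(n * (C * t * sqrt L / sqrt (n - 1)))\<^sup>2 \<le> \<epsilon>\<^sup>2" .
  show "0 \<le> \<epsilon>" using e by simp
qed

lemma det_bound:
  fixes n L Ks Kr :: nat and gs gr hgs hgr :: "nat \<Rightarrow> nat" and B :: "nat \<Rightarrow> nat \<Rightarrow> nat \<Rightarrow> real"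
    and \<delta> c0 s t \<epsilon> :: real and A :: adj
  assumes n: "n \<ge> 3" and L: "L \<ge> 1"
    and gs_range: "\<And>i. i < n \<Longrightarrow> gs i \<in> {1..Ks}"
    and gr_range: "\<And>i. i < n \<Longrightarrow> gr i \<in> {1..Kr}"
    and d: "0 < \<delta>" "\<delta> < 1/2"
    and Bb: "\<And>l k k'. l < L \<Longrightarrow> k \<in> {1..Ks} \<Longrightarrow> k' \<in> {1..Kr} \<Longrightarrow> \<delta> \<le> B l k k' \<and> B l k k' \<le> 1 - \<delta>"
    and c0: "c0 > 0"
    and A2r: "\<And>k. k \<in> {1..Kr} \<Longrightarrow> real (card {i. i < n \<and> gr i = k}) \<ge> c0 * real n / real Kr"
    and Kr: "Kr \<ge> 1"
    and les: "labels_equiv n Ks hgs gs" and ler: "labels_equiv n Kr hgr gr"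
    and good: "\<forall>l<L. \<forall>k\<in>{1..Ks}. \<forall>k'\<in>{1..Kr}.
        \<bar>\<Sum>(i, j)\<in>blk n gs gr k k'. of_bool (A (l, i, j)) - B l k k'\<bar> \<le> real (card (blk n gs gr k k')) * s"
    and s: "s \<ge> 0" and st: "s + real Kr / (c0 * real n) \<le> t" and td: "t \<le> \<delta> / 4"
    and e: "\<epsilon> > 0"
    and h: "2 * (2 / sqrt \<delta> + 4 / (\<delta> * sqrt \<delta>))\<^sup>2 * t\<^sup>2 * real n * real L \<le> \<epsilon>\<^sup>2"
  shows "spec_norm n (\<lambda>i j. Rhat n L A hgs hgr i j - Rmat n L (Omega B gs gr) A i j) \<le> \<epsilon>"
proof -
  define C where "C = 2 / sqrt \<delta> + 4 / (\<delta> * sqrt \<delta>)"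
  have C0: "C \<ge> 0" using d unfolding C_def by simp
  have "real Kr / (c0 * real n) \<ge> 0" using c0 by simp
  then have t0: "t \<ge> 0" using st s by linarith
  define bnd where "bnd = C * t * sqrt (real L) / sqrt (real n - 1)"
  have bnd0: "bnd \<ge> 0" using C0 t0 n unfolding bnd_def by simp
  have entry: "\<bar>Rhat n L A hgs hgr i j - Rmat n L (Omega B gs gr) A i j\<bar> \<le> bnd" if i: "i < n" and j: "j < n" for i j
  proof (cases "i = j")
    case True
    then show ?thesis using bnd0 by (simp add: Rhat_def Rmat_def)
  next
    case False
    define Bt where "Bt = (\<lambda>l. Bhat n A gs gr l (gs i) (gr j))"
    define Bv where "Bv = (\<lambda>l. B l (gs i) (gr j))"
    have RH: "Rhat n L A hgs hgr i j = (\<Sum>l<L. of_bool (A (l, i, j)) - Bt l) / sqrt ((real n - 1) * (\<Sum>l<L. Bt l * (1 - Bt l)))"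
      unfolding Rhat_def Rmat_def Omega_def Bt_def using False
      by (simp add: bhat_relabel[OF les ler gs_range gr_range i j])
    have RM: "Rmat n L (Omega B gs gr) A i j = (\<Sum>l<L. of_bool (A (l, i, j)) - Bv l) / sqrt ((real n - 1) * (\<Sum>l<L. Bv l * (1 - Bv l)))"
      unfolding Rmat_def Omega_def Bv_def using False by simp
    have Bvb: "\<delta> \<le> Bv l \<and> Bv l \<le> 1 - \<delta>" if "l < L" for l
      unfolding Bv_def using Bb[OF that gs_range[OF i] gr_range[OF j]] .
    have Btb: "\<bar>Bt l - Bv l\<bar> \<le> t" if l: "l < L" for l
    proof -
      have cRpos: "c0 * real n / real Kr > 0" using c0 n Kr by simp
      have "\<bar>Bt l - Bv l\<bar> \<le> s + 1 / (c0 * real n / real Kr)"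
        unfolding Bt_def Bv_def
      proof (rule bhat_close[OF i j s])
        show "0 \<le> B l (gs i) (gr j)" "B l (gs i) (gr j) \<le> 1" using Bvb[OF l] d unfolding Bv_def by auto
        show "\<bar>\<Sum>(i', j')\<in>blk n gs gr (gs i) (gr j). of_bool (A (l, i', j')) - B l (gs i) (gr j)\<bar>
                 \<le> real (card (blk n gs gr (gs i) (gr j))) * s"
          using good l gs_range[OF i] gr_range[OF j] by blast
        show "real (card {j'. j' < n \<and> gr j' = gr j}) \<ge> c0 * real n / real Kr"
          by (rule A2r[OF gr_range[OF j]])
        show "c0 * real n / real Kr > 0" by (rule cRpos)
      qed
      also have "1 / (c0 * real n / real Kr) = real Kr / (c0 * real n)" by simp
      finally show ?thesis using st by linarith
    qed
    have m: "real n - 1 > 0" using n by simp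
    have "\<bar>Rhat n L A hgs hgr i j - Rmat n L (Omega B gs gr) A i j\<bar> \<le> C * t * sqrt (real L) / sqrt (real n - 1)"
      unfolding RH RM C_def by (rule entry_full[OF L m d t0 td Bvb Btb])
    then show ?thesis unfolding bnd_def .
  qed
  have "spec_norm n (\<lambda>i j. Rhat n L A hgs hgr i j - Rmat n L (Omega B gs gr) A i j) \<le> real n * bnd"
    by (rule spec_norm_le[OF bnd0 entry])
  also have "\<dots> \<le> \<epsilon>" unfolding bnd_def
    by (rule final_arith) (use n L C0 t0 e h in \<open>auto simp: C_def\<close>)
  finally show ?thesis .
qed

lemma ln_ge1: "real n \<ge> 3 \<Longrightarrow> ln (real n) \<ge> 1"
  using exp_le by (subst ln_ge_iff) auto

lemma asym:
  fixes K L :: "nat \<Rightarrow> nat" and c0 c1 :: real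
  assumes L: "\<And>n. L n \<ge> 1" and c0: "c0 > 0" and c1: "c1 > 0"
    and A3: "(\<lambda>n. real (K n)^2 * real (L n) * ln (real n) / real n) \<longlonglongrightarrow> 0"
  shows "(\<lambda>n. real (K n)^2 * real (L n) / real n) \<longlonglongrightarrow> 0"
    and "(\<lambda>n. (real (K n) * sqrt (ln (real n) / c1) / real n + real (K n) / (c0 * real n))\<^sup>2
              * real n * real (L n)) \<longlonglongrightarrow> 0"
proof -
  define a where "a = (\<lambda>n. real (K n)^2 * real (L n) * ln (real n) / real n)"
  define f where "f = (\<lambda>n. real (K n)^2 * real (L n) / real n)"
  have ev3: "eventually (\<lambda>n. n \<ge> 3) sequentially" by (rule eventually_ge_at_top)
  have fa: "f n \<le> a n" if "n \<ge> 3" for n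
  proof -
    have "ln (real n) \<ge> 1" using that by (intro ln_ge1) simp
    moreover have "real (K n)^2 * real (L n) / real n \<ge> 0" by simp
    ultimately have "real (K n)^2 * real (L n) / real n * 1 \<le> real (K n)^2 * real (L n) / real n * ln (real n)"
      by (intro mult_left_mono) auto
    then show ?thesis unfolding f_def a_def by simp
  qed
  have f0: "f \<longlonglongrightarrow> 0"
  proof (rule tendsto_sandwich[of "\<lambda>_. 0" f sequentially a])
    show "eventually (\<lambda>n. 0 \<le> f n) sequentially" unfolding f_def by simp
    show "eventually (\<lambda>n. f n \<le> a n) sequentially" using ev3 by eventually_elim (rule fa)
    show "a \<longlonglongrightarrow> 0" using A3 unfolding a_def .
  qed simp
  then show "(\<lambda>n. real (K n)^2 * real (L n) / real n) \<longlonglongrightarrow> 0" unfolding f_def .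
  define g where "g = (\<lambda>n. (real (K n) * sqrt (ln (real n) / c1) / real n + real (K n) / (c0 * real n))\<^sup>2
              * real n * real (L n))"
  have gb: "g n \<le> (2 / c1) * a n + (2 / c0\<^sup>2) * f n" if n: "n \<ge> 3" for n
  proof -
    define x where "x = real (K n) * sqrt (ln (real n) / c1) / real n"
    define y where "y = real (K n) / (c0 * real n)"
    have ln0: "ln (real n) \<ge> 0" using ln_ge1[of n] n by simp
    have npos: "real n > 0" using n by simp
    have "(x + y)\<^sup>2 \<le> 2 * x\<^sup>2 + 2 * y\<^sup>2"
    proof -
      have "0 \<le> (x - y)\<^sup>2" by simp
      then show ?thesis by (simp add: power2_eq_square algebra_simps)
    qed
    moreover have "x\<^sup>2 = real (K n)^2 * (ln (real n) / c1) / (real n)\<^sup>2"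
      unfolding x_def using ln0 c1 by (simp add: power_mult_distrib power_divide)
    moreover have "y\<^sup>2 = real (K n)^2 / (c0\<^sup>2 * (real n)\<^sup>2)"
      unfolding y_def by (simp add: power_mult_distrib power_divide)
    ultimately have "(x + y)\<^sup>2 \<le> 2 * (real (K n)^2 * (ln (real n) / c1) / (real n)\<^sup>2) + 2 * (real (K n)^2 / (c0\<^sup>2 * (real n)\<^sup>2))"
      by simp
    then have "(x + y)\<^sup>2 * (real n * real (L n)) \<le> (2 * (real (K n)^2 * (ln (real n) / c1) / (real n)\<^sup>2) + 2 * (real (K n)^2 / (c0\<^sup>2 * (real n)\<^sup>2))) * (real n * real (L n))"
      by (intro mult_right_mono) auto
    also have "\<dots> = (2 / c1) * a n + (2 / c0\<^sup>2) * f n"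
      unfolding a_def f_def using npos c0 c1 by (simp add: field_simps power2_eq_square)
    finally show ?thesis unfolding g_def x_def y_def by (simp add: mult.assoc)
  qed
  have "g \<longlonglongrightarrow> 0"
  proof (rule tendsto_sandwich[of "\<lambda>_. 0" g sequentially "\<lambda>n. (2 / c1) * a n + (2 / c0\<^sup>2) * f n"])
    show "eventually (\<lambda>n. 0 \<le> g n) sequentially" unfolding g_def by simp
    show "eventually (\<lambda>n. g n \<le> (2 / c1) * a n + (2 / c0\<^sup>2) * f n) sequentially"
      using ev3 by eventually_elim (rule gb)
    have "a \<longlonglongrightarrow> 0" using A3 unfolding a_def .
    then show "(\<lambda>n. (2 / c1) * a n + (2 / c0\<^sup>2) * f n) \<longlonglongrightarrow> 0"
      using tendsto_add_zero[OF tendsto_mult_right_zero[of a sequentially "2 / c1"] tendsto_mult_right_zero[OF f0, of "2 / c0\<^sup>2"]]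
      by simp
  qed simp
  then show "(\<lambda>n. (real (K n) * sqrt (ln (real n) / c1) / real n + real (K n) / (c0 * real n))\<^sup>2
              * real n * real (L n)) \<longlonglongrightarrow> 0" unfolding g_def .
qed

lemma exp_m2ln: assumes npos: "(n::real) > 0" shows "exp (-2 * ln n) = 1 / n\<^sup>2"
proof -
  have "exp (real 2 * ln n) = exp (ln n) ^ 2" by (rule exp_of_nat_mult)
  then have e: "exp (2 * ln n) = n\<^sup>2" using npos by simp
  have "exp (-2 * ln n) = exp (- (2 * ln n))" by simp
  also have "\<dots> = inverse (exp (2 * ln n))" by (rule exp_minus)
  finally show ?thesis using e by (simp add: inverse_eq_divide)
qed

lemma blk_card_lb:
  fixes gs gr :: "nat \<Rightarrow> nat" and c0 :: real and K :: nat
  assumes cS: "real (card {i. i < n \<and> gs i = k}) \<ge> c0 * real n / real Ks"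
    and cR: "real (card {i. i < n \<and> gr i = k'}) \<ge> c0 * real n / real Kr"
    and c0: "c0 > 0" and KsK: "Ks \<le> K" and KrK: "Kr \<le> K" and Ks: "Ks \<ge> 1" and Kr: "Kr \<ge> 1"
    and Kn: "real K \<le> c0 * real n / 2"
  shows "real (card (blk n gs gr k k')) \<ge> c0\<^sup>2 / 2 * (real n)\<^sup>2 / (real K)\<^sup>2"
proof -
  define Sk where "Sk = {i. i < n \<and> gs i = k}"
  define Rk where "Rk = {j. j < n \<and> gr j = k'}"
  have fS: "finite Sk" unfolding Sk_def by (rule finite_subset[of _ "{..<n}"]) auto
  have fR: "finite Rk" unfolding Rk_def by (rule finite_subset[of _ "{..<n}"]) auto
  have be: "blk n gs gr k k' = {p\<in>Sk \<times> Rk. fst p \<noteq> snd p}" unfolding blk_eq Sk_def Rk_def ..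
  have d2: "card Sk * card Rk = card (blk n gs gr k k') + card {p\<in>Sk \<times> Rk. fst p = snd p}"
    unfolding be by (rule decomp(2)[OF fS fR])
  have d3: "card {p\<in>Sk \<times> Rk. fst p = snd p} \<le> card Sk" by (rule decomp(3)[OF fS fR])
  have K0: "real K \<ge> 1" using Ks KsK by simp
  have "c0 * real n > 0" using Kn K0 by linarith
  then have n0: "real n > 0" using c0 by (simp add: zero_less_mult_iff)
  have lbK: "c0 * real n / real K \<le> c0 * real n / real Ks" "c0 * real n / real K \<le> c0 * real n / real Kr"
    using KsK KrK Ks Kr c0 n0 by (auto intro!: divide_left_mono)
  have S1: "real (card Sk) \<ge> c0 * real n / real K" using cS lbK unfolding Sk_def by linarith
  have R1: "real (card Rk) \<ge> c0 * real n / real K" using cR lbK unfolding Rk_def by linarith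
  have two: "c0 * real n / real K \<ge> 2" using Kn K0 by (simp add: field_simps)
  have R2: "real (card Rk) - 1 \<ge> c0 * real n / (2 * real K)"
  proof -
    have "c0 * real n / (2 * real K) = (c0 * real n / real K) / 2" by simp
    then show ?thesis using R1 two by linarith
  qed
  have "real (card (blk n gs gr k k')) \<ge> real (card Sk) * (real (card Rk) - 1)"
  proof -
    have "real (card Sk) * real (card Rk) = real (card (blk n gs gr k k')) + real (card {p\<in>Sk \<times> Rk. fst p = snd p})"
      using d2 by (metis of_nat_add of_nat_mult)
    moreover have "real (card {p\<in>Sk \<times> Rk. fst p = snd p}) \<le> real (card Sk)" using d3 by simp
    ultimately show ?thesis by (simp add: algebra_simps)
  qed
  moreover have "real (card Sk) * (real (card Rk) - 1) \<ge> (c0 * real n / real K) * (c0 * real n / (2 * real K))"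
    using S1 R2 c0 n0 K0 by (intro mult_mono) auto
  moreover have "(c0 * real n / real K) * (c0 * real n / (2 * real K)) = c0\<^sup>2 / 2 * (real n)\<^sup>2 / (real K)\<^sup>2"
    by (simp add: power2_eq_square mult_ac)
  ultimately show ?thesis by linarith
qed

lemma block_prob2:
  fixes B :: "nat \<Rightarrow> nat \<Rightarrow> nat \<Rightarrow> real" and gs gr :: "nat \<Rightarrow> nat" and K :: nat and c0 :: real
  assumes l: "l < L" and b01: "0 \<le> B l k k'" "B l k k' \<le> 1"
    and card: "real (card (blk n gs gr k k')) \<ge> c0\<^sup>2 / 2 * (real n)\<^sup>2 / (real K)\<^sup>2"
    and c0: "c0 > 0" and K: "K \<ge> 1" and n: "n \<ge> 3"
  shows "measure_pmf.prob (adj_pmf n L (Omega B gs gr))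
     {A. \<bar>\<Sum>(i, j)\<in>blk n gs gr k k'. of_bool (A (l, i, j)) - B l k k'\<bar>
          > real (card (blk n gs gr k k')) * (real K * sqrt (ln (real n) / (c0\<^sup>2 / 2)) / real n)}
     \<le> 2 / (real n)\<^sup>2"
proof -
  define s where "s = real K * sqrt (ln (real n) / (c0\<^sup>2 / 2)) / real n"
  define N where "N = real (card (blk n gs gr k k'))"
  have ln0: "ln (real n) \<ge> 0" using ln_ge1[of n] n by simp
  have npos: "real n > 0" using n by simp
  have c1: "c0\<^sup>2 / 2 > 0" using c0 by simp
  have s0: "s \<ge> 0" unfolding s_def using ln0 c1 by simp
  have s2: "s\<^sup>2 = (real K)\<^sup>2 * (ln (real n) / (c0\<^sup>2 / 2)) / (real n)\<^sup>2"
    unfolding s_def using ln0 c1 by (simp add: power_mult_distrib power_divide)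
  have "N * s\<^sup>2 \<ge> c0\<^sup>2 / 2 * (real n)\<^sup>2 / (real K)\<^sup>2 * s\<^sup>2"
    using card unfolding N_def by (intro mult_right_mono) auto
  also have "c0\<^sup>2 / 2 * (real n)\<^sup>2 / (real K)\<^sup>2 * s\<^sup>2 = ln (real n)"
    unfolding s2 using npos K c0 by (simp add: field_simps)
  finally have Ns: "N * s\<^sup>2 \<ge> ln (real n)" .
  have "measure_pmf.prob (adj_pmf n L (Omega B gs gr))
     {A. \<bar>\<Sum>(i, j)\<in>blk n gs gr k k'. of_bool (A (l, i, j)) - B l k k'\<bar> > N * s}
     \<le> 2 * exp (-2 * N * s\<^sup>2)"
    unfolding N_def by (rule block_prob[where B=B, OF l s0 b01])
  also have "\<dots> \<le> 2 * exp (-2 * ln (real n))" using Ns by simp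
  also have "exp (-2 * ln (real n)) = 1 / (real n)\<^sup>2" by (rule exp_m2ln[OF npos])
  finally show ?thesis unfolding N_def s_def by simp
qed

theorem lemma5:
  fixes L Ks Kr Ks0 Kr0 :: "nat \<Rightarrow> nat"
    and gs gr :: "nat \<Rightarrow> nat \<Rightarrow> nat"
    and B :: "nat \<Rightarrow> nat \<Rightarrow> nat \<Rightarrow> nat \<Rightarrow> real"
    and M :: "nat \<Rightarrow> nat \<Rightarrow> nat \<Rightarrow> nat \<Rightarrow> adj \<Rightarrow> (nat \<Rightarrow> nat) \<times> (nat \<Rightarrow> nat)"
    and \<delta> c0 :: real
  assumes L_pos: "\<And>n. L n \<ge> 1"
    and K_pos: "\<And>n. Ks n \<ge> 1" "\<And>n. Kr n \<ge> 1"
    and gs_range: "\<And>n i. i < n \<Longrightarrow> gs n i \<in> {1..Ks n}"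
    and gr_range: "\<And>n i. i < n \<Longrightarrow> gr n i \<in> {1..Kr n}"
    and H0: "\<And>n. Ks n = Ks0 n" "\<And>n. Kr n = Kr0 n"
    and A1: "0 < \<delta>" "\<delta> < 1/2"
      "\<And>n l k k'. l < L n \<Longrightarrow> k \<in> {1..Ks n} \<Longrightarrow> k' \<in> {1..Kr n} \<Longrightarrow>
          \<delta> \<le> B n l k k' \<and> B n l k k' \<le> 1 - \<delta>"
    and A2: "c0 > 0"
      "\<And>n k. k \<in> {1..Ks n} \<Longrightarrow> real (card {i. i < n \<and> gs n i = k}) \<ge> c0 * real n / real (Ks n)"
      "\<And>n k. k \<in> {1..Kr n} \<Longrightarrow> real (card {i. i < n \<and> gr n i = k}) \<ge> c0 * real n / real (Kr n)"
    and A3: "(\<lambda>n. real (max (Ks n) (Kr n))^2 * real (L n) * ln (real n) / real n) \<longlonglongrightarrow> 0"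
    and A4s: "(\<lambda>n. measure_pmf.prob (adj_pmf n (L n) (Omega (B n) (gs n) (gr n)))
                {A. labels_equiv n (Ks n) (fst (M n (L n) (Ks n) (Kr n) A)) (gs n)}) \<longlonglongrightarrow> 1"
    and A4r: "(\<lambda>n. measure_pmf.prob (adj_pmf n (L n) (Omega (B n) (gs n) (gr n)))
                {A. labels_equiv n (Kr n) (snd (M n (L n) (Ks n) (Kr n) A)) (gr n)}) \<longlonglongrightarrow> 1"
  shows "\<And>\<epsilon>. \<epsilon> > 0 \<Longrightarrow>
    (\<lambda>n. measure_pmf.prob (adj_pmf n (L n) (Omega (B n) (gs n) (gr n)))
       {A. spec_norm n (\<lambda>i j.
             Rhat n (L n) A (fst (M n (L n) (Ks0 n) (Kr0 n) A)) (snd (M n (L n) (Ks0 n) (Kr0 n) A)) i j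
             - Rmat n (L n) (Omega (B n) (gs n) (gr n)) A i j) > \<epsilon>}) \<longlonglongrightarrow> 0"
proof -
  fix \<epsilon> :: real assume e: "\<epsilon> > 0"
  define K where "K = (\<lambda>n. max (Ks n) (Kr n))"
  define c1 where "c1 = c0\<^sup>2 / 2"
  define s where "s = (\<lambda>n. real (K n) * sqrt (ln (real n) / c1) / real n)"
  define t where "t = (\<lambda>n. s n + real (K n) / (c0 * real n))"
  define C where "C = 2 / sqrt \<delta> + 4 / (\<delta> * sqrt \<delta>)"
  define P where "P = (\<lambda>n. measure_pmf.prob (adj_pmf n (L n) (Omega (B n) (gs n) (gr n))))"
  define Ev where "Ev = (\<lambda>n. {A. spec_norm n (\<lambda>i j.
             Rhat n (L n) A (fst (M n (L n) (Ks0 n) (Kr0 n) A)) (snd (M n (L n) (Ks0 n) (Kr0 n) A)) i j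
             - Rmat n (L n) (Omega (B n) (gs n) (gr n)) A i j) > \<epsilon>})"
  define NS where "NS = (\<lambda>n. {A. \<not> labels_equiv n (Ks n) (fst (M n (L n) (Ks n) (Kr n) A)) (gs n)})"
  define NR where "NR = (\<lambda>n. {A. \<not> labels_equiv n (Kr n) (snd (M n (L n) (Ks n) (Kr n) A)) (gr n)})"
  define Bad where "Bad = (\<lambda>n (l, k, k'). {A. \<bar>\<Sum>(i, j)\<in>blk n (gs n) (gr n) k k'. of_bool (A (l, i, j)) - B n l k k'\<bar>
          > real (card (blk n (gs n) (gr n) k k')) * s n})"
  define Idx where "Idx = (\<lambda>n. {..<L n} \<times> {1..Ks n} \<times> {1..Kr n})"
  define NG where "NG = (\<lambda>n. \<Union>x\<in>Idx n. Bad n x)"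
  have c1: "c1 > 0" using A2(1) unfolding c1_def by simp
  have C0: "C > 0" using A1(1) unfolding C_def by (intro add_pos_pos divide_pos_pos mult_pos_pos) auto
  have Kge: "K n \<ge> 1" "Ks n \<le> K n" "Kr n \<le> K n" for n unfolding K_def using K_pos[of n] by auto
  have A3': "(\<lambda>n. real (K n)^2 * real (L n) * ln (real n) / real n) \<longlonglongrightarrow> 0"
    using A3 unfolding K_def .
  note as = asym[OF L_pos A2(1) c1 A3']
  have t_lim: "(\<lambda>n. (t n)\<^sup>2 * real n * real (L n)) \<longlonglongrightarrow> 0"
    using as(2) unfolding t_def s_def .
  define \<eta> where "\<eta> = min (\<delta>\<^sup>2 / 16) (\<epsilon>\<^sup>2 / (2 * C\<^sup>2))"
  have eta: "\<eta> > 0" unfolding \<eta>_def using A1(1) e C0 by simp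
  have ev_t: "eventually (\<lambda>n. (t n)\<^sup>2 * real n * real (L n) < \<eta>) sequentially"
    by (rule order_tendstoD(2)[OF t_lim eta])
  have ev_K: "eventually (\<lambda>n. real (K n)^2 * real (L n) / real n < c0\<^sup>2 / 4) sequentially"
    by (rule order_tendstoD(2)[OF as(1)]) (use A2(1) in simp)
  have ev3: "eventually (\<lambda>n. n \<ge> 3) sequentially" by (rule eventually_ge_at_top)
  have Kn: "real (K n) \<le> c0 * real n / 2"
    if n: "n \<ge> 3" and h: "real (K n)^2 * real (L n) / real n < c0\<^sup>2 / 4" for n
  proof -
    have npos: "real n > 0" using n by simp
    have L1: "real (L n) \<ge> 1" using L_pos[of n] by simp
    have "real (K n)^2 * 1 \<le> real (K n)^2 * real (L n)" by (rule mult_left_mono[OF L1]) simp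
    then have "real (K n)^2 \<le> real (K n)^2 * real (L n)" by simp
    also have "\<dots> < c0\<^sup>2 / 4 * real n" using h pos_divide_less_eq[OF npos] by simp
    also have "\<dots> \<le> c0\<^sup>2 / 4 * (real n)\<^sup>2"
    proof (rule mult_left_mono)
      show "real n \<le> (real n)\<^sup>2" using n by (simp add: power2_eq_square)
    qed simp
    also have "\<dots> = (c0 * real n / 2)\<^sup>2" by (simp add: power2_eq_square)
    finally have "(real (K n))\<^sup>2 \<le> (c0 * real n / 2)\<^sup>2" by simp
    then show ?thesis by (rule power2_le_imp_le) (use A2(1) npos in auto)
  qed
  have incl: "Ev n \<subseteq> NS n \<union> NR n \<union> NG n"
    if n: "n \<ge> 3" and ht: "(t n)\<^sup>2 * real n * real (L n) < \<eta>" for n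
  proof
    fix A assume AE: "A \<in> Ev n"
    show "A \<in> NS n \<union> NR n \<union> NG n"
    proof (rule ccontr)
      assume "A \<notin> NS n \<union> NR n \<union> NG n"
      then have les: "labels_equiv n (Ks n) (fst (M n (L n) (Ks n) (Kr n) A)) (gs n)"
        and ler: "labels_equiv n (Kr n) (snd (M n (L n) (Ks n) (Kr n) A)) (gr n)"
        and gd: "A \<notin> NG n" unfolding NS_def NR_def by auto
      have good: "\<forall>l<L n. \<forall>k\<in>{1..Ks n}. \<forall>k'\<in>{1..Kr n}.
          \<bar>\<Sum>(i, j)\<in>blk n (gs n) (gr n) k k'. of_bool (A (l, i, j)) - B n l k k'\<bar>
            \<le> real (card (blk n (gs n) (gr n) k k')) * s n"
        using gd unfolding NG_def Idx_def Bad_def by (auto simp: not_less)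
      have npos: "real n > 0" using n by simp
      have s0: "s n \<ge> 0" unfolding s_def using ln_ge1[of n] n c1 by simp
      have st: "s n + real (Kr n) / (c0 * real n) \<le> t n"
        unfolding t_def using Kge(3)[of n] A2(1) npos by (simp add: divide_right_mono)
      have nL: "real n * real (L n) \<ge> 1"
      proof -
        have "real n \<ge> 1" "real (L n) \<ge> 1" using n L_pos[of n] by auto
        then show ?thesis using mult_mono[of 1 "real n" 1 "real (L n)"] by simp
      qed
      have "real (Kr n) / (c0 * real n) \<ge> 0" using A2(1) by simp
      then have t0: "t n \<ge> 0" using st s0 by linarith
      have "(t n)\<^sup>2 \<le> (t n)\<^sup>2 * (real n * real (L n))" using nL by (simp add: mult_le_cancel_left1)
      also have "\<dots> < \<eta>" using ht by (simp add: mult.assoc)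
      also have "\<eta> \<le> (\<delta> / 4)\<^sup>2" unfolding \<eta>_def by (simp add: power_divide)
      finally have "(t n)\<^sup>2 \<le> (\<delta> / 4)\<^sup>2" by simp
      then have td: "t n \<le> \<delta> / 4" by (rule power2_le_imp_le) (use A1(1) in auto)
      have h: "2 * C\<^sup>2 * (t n)\<^sup>2 * real n * real (L n) \<le> \<epsilon>\<^sup>2"
      proof -
        have "(t n)\<^sup>2 * real n * real (L n) \<le> \<epsilon>\<^sup>2 / (2 * C\<^sup>2)" using ht unfolding \<eta>_def by simp
        then have "2 * C\<^sup>2 * ((t n)\<^sup>2 * real n * real (L n)) \<le> \<epsilon>\<^sup>2" using C0 by (simp add: field_simps)
        then show ?thesis by (simp add: mult.assoc)
      qed
      have h': "2 * (2 / sqrt \<delta> + 4 / (\<delta> * sqrt \<delta>))\<^sup>2 * (t n)\<^sup>2 * real n * real (L n) \<le> \<epsilon>\<^sup>2"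
        using h unfolding C_def .
      have "spec_norm n (\<lambda>i j. Rhat n (L n) A (fst (M n (L n) (Ks n) (Kr n) A)) (snd (M n (L n) (Ks n) (Kr n) A)) i j
               - Rmat n (L n) (Omega (B n) (gs n) (gr n)) A i j) \<le> \<epsilon>"
        by (rule det_bound[OF n L_pos gs_range gr_range A1(1,2) A1(3) A2(1) A2(3) K_pos(2) les ler good s0 st td e h'])
      then show False using AE unfolding Ev_def using H0 by simp
    qed
  qed
  have PNG: "P n (NG n) \<le> 2 * real (L n) * real (K n)^2 / (real n)\<^sup>2"
    if n: "n \<ge> 3" and hK: "real (K n) \<le> c0 * real n / 2" for n
  proof -
    have "P n (NG n) \<le> (\<Sum>x\<in>Idx n. P n (Bad n x))"
      unfolding NG_def P_def by (rule measure_pmf.finite_measure_subadditive_finite) (auto simp: Idx_def)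
    also have "\<dots> \<le> (\<Sum>x\<in>Idx n. 2 / (real n)\<^sup>2)"
    proof (rule sum_mono)
      fix x assume x: "x \<in> Idx n"
      obtain l k k' where xe: "x = (l, k, k')" by (cases x) auto
      have l: "l < L n" and k: "k \<in> {1..Ks n}" and k': "k' \<in> {1..Kr n}" using x xe Idx_def by auto
      have bb: "0 \<le> B n l k k'" "B n l k k' \<le> 1" using A1(3)[OF l k k'] A1(1,2) by auto
      have card: "real (card (blk n (gs n) (gr n) k k')) \<ge> c0\<^sup>2 / 2 * (real n)\<^sup>2 / (real (K n))\<^sup>2"
        by (rule blk_card_lb[OF A2(2)[OF k] A2(3)[OF k'] A2(1) Kge(2) Kge(3) K_pos(1) K_pos(2) hK])
      show "P n (Bad n x) \<le> 2 / (real n)\<^sup>2"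
        unfolding P_def Bad_def xe s_def c1_def
        using block_prob2[where B="B n" and l=l and k=k and k'=k' and L="L n" and gs="gs n" and gr="gr n", OF l bb card A2(1) Kge(1)[of n] n] by simp
    qed
    also have "\<dots> = real (L n * Ks n * Kr n) * (2 / (real n)\<^sup>2)"
      by (simp add: Idx_def card_cartesian_product)
    also have "\<dots> \<le> real (L n * K n * K n) * (2 / (real n)\<^sup>2)"
      using Kge[of n] by (intro mult_right_mono) (auto intro!: mult_mono)
    also have "\<dots> = 2 * real (L n) * real (K n)^2 / (real n)\<^sup>2" by (simp add: power2_eq_square)
    finally show ?thesis .
  qed
  have lim3: "(\<lambda>n. 2 * real (L n) * real (K n)^2 / (real n)\<^sup>2) \<longlonglongrightarrow> 0"
  proof (rule tendsto_sandwich[of "\<lambda>_. 0" _ sequentially "\<lambda>n. 2 * (real (K n)^2 * real (L n) / real n)"])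
    show "eventually (\<lambda>n. 0 \<le> 2 * real (L n) * real (K n)^2 / (real n)\<^sup>2) sequentially" by simp
    show "eventually (\<lambda>n. 2 * real (L n) * real (K n)^2 / (real n)\<^sup>2 \<le> 2 * (real (K n)^2 * real (L n) / real n)) sequentially"
      using ev3
    proof eventually_elim
      case (elim n)
      have n1: "real n \<ge> 1" using elim by simp
      have "real n \<le> (real n)\<^sup>2" using n1 by (simp add: power2_eq_square)
      then have "real (K n)^2 * real (L n) / (real n)\<^sup>2 \<le> real (K n)^2 * real (L n) / real n"
        by (intro divide_left_mono) (use n1 in auto)
      moreover have "2 * real (L n) * real (K n)^2 / (real n)\<^sup>2 = 2 * (real (K n)^2 * real (L n) / (real n)\<^sup>2)"
        by simp
      ultimately show ?case by linarith
    qed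
    show "(\<lambda>n. 2 * (real (K n)^2 * real (L n) / real n)) \<longlonglongrightarrow> 0"
      using tendsto_mult_right_zero[OF as(1), of 2] by simp
  qed simp
  have limS: "(\<lambda>n. P n (NS n)) \<longlonglongrightarrow> 0"
  proof -
    have "P n (NS n) = 1 - measure_pmf.prob (adj_pmf n (L n) (Omega (B n) (gs n) (gr n)))
                {A. labels_equiv n (Ks n) (fst (M n (L n) (Ks n) (Kr n) A)) (gs n)}" for n
      unfolding P_def NS_def
      using measure_pmf.prob_compl[of "{A. labels_equiv n (Ks n) (fst (M n (L n) (Ks n) (Kr n) A)) (gs n)}"
          "adj_pmf n (L n) (Omega (B n) (gs n) (gr n))"]
      by (simp add: Compl_eq_Diff_UNIV[symmetric] Collect_neg_eq)
    then show ?thesis using tendsto_diff[OF tendsto_const[of 1] A4s] by simp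
  qed
  have limR: "(\<lambda>n. P n (NR n)) \<longlonglongrightarrow> 0"
  proof -
    have "P n (NR n) = 1 - measure_pmf.prob (adj_pmf n (L n) (Omega (B n) (gs n) (gr n)))
                {A. labels_equiv n (Kr n) (snd (M n (L n) (Ks n) (Kr n) A)) (gr n)}" for n
      unfolding P_def NR_def
      using measure_pmf.prob_compl[of "{A. labels_equiv n (Kr n) (snd (M n (L n) (Ks n) (Kr n) A)) (gr n)}"
          "adj_pmf n (L n) (Omega (B n) (gs n) (gr n))"]
      by (simp add: Compl_eq_Diff_UNIV[symmetric] Collect_neg_eq)
    then show ?thesis using tendsto_diff[OF tendsto_const[of 1] A4r] by simp
  qed
  have "(\<lambda>n. P n (Ev n)) \<longlonglongrightarrow> 0"
  proof (rule tendsto_sandwich[of "\<lambda>_. 0" _ sequentially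
        "\<lambda>n. P n (NS n) + P n (NR n) + 2 * real (L n) * real (K n)^2 / (real n)\<^sup>2"])
    show "eventually (\<lambda>n. 0 \<le> P n (Ev n)) sequentially" unfolding P_def by simp
    show "eventually (\<lambda>n. P n (Ev n) \<le> P n (NS n) + P n (NR n) + 2 * real (L n) * real (K n)^2 / (real n)\<^sup>2) sequentially"
      using ev3 ev_t ev_K
    proof eventually_elim
      case (elim n)
      have hK: "real (K n) \<le> c0 * real n / 2" by (rule Kn) (use elim in auto)
      have "P n (Ev n) \<le> P n (NS n \<union> NR n \<union> NG n)"
        unfolding P_def by (rule measure_pmf.finite_measure_mono[OF incl]) (use elim in auto)
      also have "\<dots> \<le> P n (NS n) + P n (NR n) + P n (NG n)"
      proof -
        have u1: "P n (NS n \<union> NR n \<union> NG n) \<le> P n (NS n \<union> NR n) + P n (NG n)"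
          unfolding P_def by (rule measure_Un_le) simp_all
        have u2: "P n (NS n \<union> NR n) \<le> P n (NS n) + P n (NR n)"
          unfolding P_def by (rule measure_Un_le) simp_all
        show ?thesis using u1 u2 by linarith
      qed
      also have "\<dots> \<le> P n (NS n) + P n (NR n) + 2 * real (L n) * real (K n)^2 / (real n)\<^sup>2"
        using PNG[OF _ hK] elim by simp
      finally show ?case .
    qed
    show "(\<lambda>n. P n (NS n) + P n (NR n) + 2 * real (L n) * real (K n)^2 / (real n)\<^sup>2) \<longlonglongrightarrow> 0"
      using tendsto_add[OF tendsto_add[OF limS limR] lim3] by simp
  qed simp
  then show "(\<lambda>n. measure_pmf.prob (adj_pmf n (L n) (Omega (B n) (gs n) (gr n)))
       {A. spec_norm n (\<lambda>i j.
             Rhat n (L n) A (fst (M n (L n) (Ks0 n) (Kr0 n) A)) (snd (M n (L n) (Ks0 n) (Kr0 n) A)) i j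
             - Rmat n (L n) (Omega (B n) (gs n) (gr n)) A i j) > \<epsilon>}) \<longlonglongrightarrow> 0"
    unfolding P_def Ev_def .
qed

end
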